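(* Fix $n\in\mathbb N$ and let $H_0$ be a finite weakly $n$-saturated graph with vertex set $V(H_0)=\{1,2,\dots,k\}$ for some $k\ge n$. For $m\in\mathbb N$ let $H_m$ be the random graph with vertex set $\{1,\dots,k\}\times\{0,1,\dots,m\}$ whose edge relation is determined as follows: (i) for all $i<j\le k$, $(i,0)$ and $(j,0)$ are adjacent in $H_m$ if and only if $i$ and $j$ are adjacent in $H_0$; (ii) for all $i,j\le k$, if $i$ and $j$ are not adjacent in $H_0$, then $(i,s)$ and $(j,t)$ are not adjacent for any $s,t\le m$; (iii) if $i$ and $j$ are adjacent in $H_0$ and $s,t\le m$ with at least one of $s,t$ positive, then $(i,s)$ and $(j,t)$ are adjacent in $H_m$ with probability $1/2$, each such decision made independently of all others; (iv) $H_m$ is reflexive (and the edge relation is symmetric). Then there is $m\in\mathbb N$ such that (A) the probability that $H_m$ is $n$-saturated is positive; and (B) the probability of the following event $\mathcal X$ is positive: for every $p<n$, every $i_1,\dots,i_p,i\in V(H_0)$ such that $i_1,\dots,i_p$ are each adjacent to $i$ in $H_0$, and every $j_1,\dots,j_p\in\{0,1,\dots,m\}$, there is $l\in\{0,1,\dots,m\}$ such that $(i_1,j_1),\dots,(i_p,j_p)$ are all adjacent to $(i,l)$ in $H_m$.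
   Context: A graph is a pair $G=(V(G),E(G))$ where $V(G)$ is a non-empty set and $E(G)$ is a symmetric and reflexive relation on $V(G)$. For $A\subseteq V(G)$, a type over $A$ is a function $f\colon A\to\{0,1\}$; a vertex $v\in V(G)\setminus A$ realizes $f$ if for every $a\in A$, $(a,v)\in E(G)$ iff $f(a)=1$. $G$ is $n$-saturated if for every $A\subseteq V(G)$ with $|A|<n$ and every type $f\in\{0,1\}^A$ some vertex $x\in V(G)\setminus A$ realizes $f$. $G$ is weakly $n$-saturated if for every $A\subseteq V(G)$ with $|A|<n$ there is $x\in V(G)$ adjacent to every $a\in A$. *)

theory Defs
  imports "HOL-Probability.Product_PMF"
begin

definition is_graph :: "'a set \<Rightarrow> ('a \<times> 'a) set \<Rightarrow> bool" where
  "is_graph V E \<longleftrightarrow> V \<noteq> {} \<and> E \<subseteq> V \<times> V \<and> sym E \<and> (\<forall>v\<in>V. (v, v) \<in> E)"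

definition n_saturated :: "'a set \<Rightarrow> ('a \<times> 'a) set \<Rightarrow> nat \<Rightarrow> bool" where
  "n_saturated V E n \<longleftrightarrow>
     (\<forall>A f. A \<subseteq> V \<and> finite A \<and> card A < n \<longrightarrow>
        (\<exists>x\<in>V - A. \<forall>a\<in>A. ((a, x) \<in> E \<longleftrightarrow> f a)))"

definition weakly_n_saturated :: "'a set \<Rightarrow> ('a \<times> 'a) set \<Rightarrow> nat \<Rightarrow> bool" where
  "weakly_n_saturated V E n \<longleftrightarrow>
     (\<forall>A. A \<subseteq> V \<and> finite A \<and> card A < n \<longrightarrow> (\<exists>x\<in>V. \<forall>a\<in>A. (a, x) \<in> E))"

definition HV :: "nat \<Rightarrow> nat \<Rightarrow> (nat \<times> nat) set" where
  "HV k m = {1..k} \<times> {0..m}"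

text \<open>The unordered pairs of distinct vertices of H_m whose adjacency is decided by a coin flip.\<close>
definition free_pairs :: "nat \<Rightarrow> (nat \<times> nat) set \<Rightarrow> nat \<Rightarrow> (nat \<times> nat) set set" where
  "free_pairs k E0 m =
     {{u, v} | u v. u \<in> HV k m \<and> v \<in> HV k m \<and> u \<noteq> v \<and> (fst u, fst v) \<in> E0
                    \<and> (0 < snd u \<or> 0 < snd v)}"

definition H_edges :: "nat \<Rightarrow> (nat \<times> nat) set \<Rightarrow> nat \<Rightarrow> ((nat \<times> nat) set \<Rightarrow> bool)
                        \<Rightarrow> ((nat \<times> nat) \<times> (nat \<times> nat)) set" where
  "H_edges k E0 m c =
     {(u, v). u \<in> HV k m \<and> v \<in> HV k m \<and>
        (u = v \<or> (snd u = 0 \<and> snd v = 0 \<and> (fst u, fst v) \<in> E0)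
               \<or> ({u, v} \<in> free_pairs k E0 m \<and> c {u, v}))}"

definition H_random :: "nat \<Rightarrow> (nat \<times> nat) set \<Rightarrow> nat \<Rightarrow> ((nat \<times> nat) \<times> (nat \<times> nat)) set pmf" where
  "H_random k E0 m =
     map_pmf (H_edges k E0 m) (Pi_pmf (free_pairs k E0 m) False (\<lambda>_. bernoulli_pmf (1/2)))"

definition event_X :: "nat \<Rightarrow> nat \<Rightarrow> (nat \<times> nat) set \<Rightarrow> nat \<Rightarrow> ((nat \<times> nat) \<times> (nat \<times> nat)) set set" where
  "event_X n k E0 m =
     {E. \<forall>p<n. \<forall>(ii :: nat \<Rightarrow> nat) i (jj :: nat \<Rightarrow> nat).
          i \<in> {1..k} \<and> (\<forall>q<p. ii q \<in> {1..k} \<and> (ii q, i) \<in> E0 \<and> jj q \<in> {0..m}) \<longrightarrow>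
          (\<exists>l\<in>{0..m}. \<forall>q<p. ((ii q, jj q), (i, l)) \<in> E)}"

end

theory Submission
  imports Defs
begin


lemma prob_pair_times:
  "measure_pmf.prob (pair_pmf M N) (X \<times> Y) = measure_pmf.prob M X * measure_pmf.prob N Y"
proof -
  have "measure_pmf.prob (pair_pmf M N) (X \<times> Y) =
        measure_pmf.prob (pair_pmf M N) ((X \<times> Y) \<inter> set_pmf (pair_pmf M N))"
    by (rule measure_Int_set_pmf[symmetric])
  also have "(X \<times> Y) \<inter> set_pmf (pair_pmf M N) = (X \<inter> set_pmf M) \<times> (Y \<inter> set_pmf N)"
    by (auto simp: set_pair_pmf)
  also have "measure_pmf.prob (pair_pmf M N) \<dots> =
     measure_pmf.prob M (X \<inter> set_pmf M) * measure_pmf.prob N (Y \<inter> set_pmf N)"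
    by (rule measure_pmf_prob_product) auto
  finally show ?thesis by (simp add: measure_Int_set_pmf)
qed

lemma prob_Pi_pmf_subset:
  assumes "finite F" "B \<subseteq> F" "S \<subseteq> B"
    and dep: "\<And>c c'. (\<And>x. x \<in> S \<Longrightarrow> c x = c' x) \<Longrightarrow> P c = P c'"
  shows "measure_pmf.prob (Pi_pmf B d p) {c. P c} = measure_pmf.prob (Pi_pmf F d p) {c. P c}"
proof -
  have "Pi_pmf B d p = map_pmf (\<lambda>f x. if x \<in> B then f x else d) (Pi_pmf F d p)"
    by (rule Pi_pmf_subset) (use assms in auto)
  then have "measure_pmf.prob (Pi_pmf B d p) {c. P c} =
     measure_pmf.prob (Pi_pmf F d p) ((\<lambda>f x. if x \<in> B then f x else d) -` {c. P c})"
    by (simp add: measure_map_pmf)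
  also have "(\<lambda>f x. if x \<in> B then f x else d) -` {c. P c} = {c. P c}"
  proof -
    have "P (\<lambda>x. if x \<in> B then f x else d) = P f" for f
      by (rule dep) (use assms(3) in auto)
    then show ?thesis by auto
  qed
  finally show ?thesis .
qed

lemma indep_blocks:
  fixes p :: "'a \<Rightarrow> 'b pmf" and S :: "'l \<Rightarrow> 'a set"
  assumes "finite L"
  shows "finite F \<Longrightarrow> (\<And>l. l \<in> L \<Longrightarrow> S l \<subseteq> F) \<Longrightarrow> disjoint_family_on S L \<Longrightarrow>
     (\<And>l c c'. l \<in> L \<Longrightarrow> (\<And>x. x \<in> S l \<Longrightarrow> c x = c' x) \<Longrightarrow> P l c = P l c') \<Longrightarrow>
     measure_pmf.prob (Pi_pmf F d p) {c. \<forall>l\<in>L. P l c} =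
       (\<Prod>l\<in>L. measure_pmf.prob (Pi_pmf F d p) {c. P l c})"
  using assms
proof (induction L arbitrary: F rule: finite_induct)
  case empty
  then show ?case by simp
next
  case (insert l0 L F)
  define A where "A = S l0"
  define B where "B = F - S l0"
  have AF: "A \<subseteq> F" using insert.prems(2) A_def by auto
  have finA: "finite A" using AF insert.prems(1) finite_subset by blast
  have finB: "finite B" using insert.prems(1) B_def by auto
  have FAB: "F = A \<union> B" using AF B_def A_def by auto
  define h where "h = (\<lambda>(f::'a \<Rightarrow> 'b, g) x. if x \<in> A then f x else g x)"
  have eq: "Pi_pmf F d p = map_pmf h (pair_pmf (Pi_pmf A d p) (Pi_pmf B d p))"
    unfolding FAB h_def by (rule Pi_pmf_union) (use finA finB B_def A_def in auto)
  have disj: "S l \<inter> A = {}" if "l \<in> L" for l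
    using insert.prems(3) insert.hyps(2) that unfolding disjoint_family_on_def A_def by auto
  have SB: "S l \<subseteq> B" if "l \<in> L" for l
    using disj[OF that] insert.prems(2)[of l] that B_def A_def by auto
  have pre: "h -` {c. \<forall>l\<in>insert l0 L. P l c} = {f. P l0 f} \<times> {g. \<forall>l\<in>L. P l g}"
  proof -
    have 1: "P l0 (h (f, g)) = P l0 f" for f g
      by (rule insert.prems(4)) (auto simp: h_def A_def)
    have 2: "P l (h (f, g)) = P l g" if "l \<in> L" for f g l
      by (rule insert.prems(4)) (use that disj[OF that] in \<open>auto simp: h_def\<close>)
    show ?thesis using 1 2 by auto
  qed
  have "measure_pmf.prob (Pi_pmf F d p) {c. \<forall>l\<in>insert l0 L. P l c} =
        measure_pmf.prob (Pi_pmf A d p) {f. P l0 f} * measure_pmf.prob (Pi_pmf B d p) {g. \<forall>l\<in>L. P l g}"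
    by (simp only: eq measure_map_pmf pre prob_pair_times)
  also have "measure_pmf.prob (Pi_pmf A d p) {f. P l0 f} = measure_pmf.prob (Pi_pmf F d p) {f. P l0 f}"
    by (rule prob_Pi_pmf_subset[OF insert.prems(1) AF, of A], simp, rule insert.prems(4))
       (auto simp: A_def)
  also have "measure_pmf.prob (Pi_pmf B d p) {g. \<forall>l\<in>L. P l g} =
       (\<Prod>l\<in>L. measure_pmf.prob (Pi_pmf B d p) {c. P l c})"
    by (rule insert.IH[OF finB SB], simp, use insert.prems(3) in \<open>simp add: disjoint_family_on_def\<close>,
        rule insert.prems(4)) auto
  also have "\<dots> = (\<Prod>l\<in>L. measure_pmf.prob (Pi_pmf F d p) {c. P l c})"
    by (rule prod.cong[OF refl], rule prob_Pi_pmf_subset[OF insert.prems(1) _ SB], simp add: B_def,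
        simp, rule insert.prems(4)) auto
  finally show ?case using insert.hyps by simp
qed

lemma poly_geom_lim:
  fixes q c :: real and d :: nat
  assumes "0 \<le> q" "q < 1" "0 \<le> c"
  shows "(\<lambda>M. (real M + c) ^ d * q ^ M) \<longlonglongrightarrow> 0"
proof (cases "d = 0")
  case True
  then show ?thesis using assms by (simp add: LIMSEQ_power_zero)
next
  case False
  define r where "r = root d q"
  have r0: "0 \<le> r" using assms r_def by (simp add: real_root_ge_zero)
  have r1: "r < 1" using assms False r_def by (simp add: real_root_lt_1_iff)
  have rq: "r ^ d = q" using assms False r_def by simp
  have "(\<lambda>M. real M * r ^ M + c * r ^ M) \<longlonglongrightarrow> 0 + c * 0"
    by (intro tendsto_add tendsto_mult tendsto_const powser_times_n_limit_0 LIMSEQ_power_zero)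
       (use r0 r1 in auto)
  then have "(\<lambda>M. ((real M + c) * r ^ M) ^ d) \<longlonglongrightarrow> 0 ^ d"
    by (intro tendsto_power) (simp add: algebra_simps)
  moreover have "((real M + c) * r ^ M) ^ d = (real M + c) ^ d * q ^ M" for M
    by (simp add: power_mult_distrib rq[symmetric] power_mult[symmetric] mult.commute)
  ultimately show ?thesis using False by (simp add: power_0_left)
qed



lemma free_pair_iff:
  assumes "a \<in> HV k m" "i \<in> {1..k}" "1 \<le> l" "l \<le> m" "a \<noteq> (i, l)" "sym E0"
  shows "{a, (i, l)} \<in> free_pairs k E0 m \<longleftrightarrow> (fst a, i) \<in> E0"
proof
  assume "(fst a, i) \<in> E0"
  then show "{a, (i, l)} \<in> free_pairs k E0 m"
  proof -
    have "a \<in> HV k m \<and> (i, l) \<in> HV k m \<and> a \<noteq> (i, l) \<and> (fst a, fst (i, l)) \<in> E0 \<and> (0 < snd a \<or> 0 < snd (i, l))"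
      using assms \<open>(fst a, i) \<in> E0\<close> by (auto simp: HV_def)
    then show ?thesis unfolding free_pairs_def by blast
  qed
next
  assume "{a, (i, l)} \<in> free_pairs k E0 m"
  then obtain u v where uv: "{a, (i, l)} = {u, v}" "(fst u, fst v) \<in> E0"
    unfolding free_pairs_def by auto
  from uv(1) have "(u = a \<and> v = (i,l)) \<or> (u = (i,l) \<and> v = a)"
    by (auto simp: doubleton_eq_iff)
  then show "(fst a, i) \<in> E0" using uv(2) assms(6) by (auto dest: symD)
qed

lemma edge_iff:
  assumes "a \<in> HV k m" "i \<in> {1..k}" "1 \<le> l" "l \<le> m" "a \<noteq> (i, l)" "sym E0"
  shows "(a, (i, l)) \<in> H_edges k E0 m c \<longleftrightarrow> (fst a, i) \<in> E0 \<and> c {a, (i, l)}"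
proof -
  have "(i, l) \<in> HV k m" using assms by (auto simp: HV_def)
  then show ?thesis
    using assms free_pair_iff[OF assms] unfolding H_edges_def by auto
qed

definition good :: "nat \<Rightarrow> nat \<Rightarrow> (nat \<times> nat) set \<Rightarrow> nat \<Rightarrow> ((nat \<times> nat) set \<Rightarrow> bool) \<Rightarrow> bool" where
  "good n k E0 m c \<longleftrightarrow> (\<forall>i\<in>{1..k}. \<forall>A T. A \<subseteq> HV k m \<and> card A < n \<and> T \<subseteq> A \<longrightarrow>
      (\<exists>l\<in>{1..m}. (i, l) \<notin> A \<and> (\<forall>a\<in>A. (fst a, i) \<in> E0 \<longrightarrow> c {a, (i, l)} = (a \<in> T))))"

lemma good_sat:
  assumes g: "good n k E0 m c" and gr: "is_graph {1..k} E0" and ws: "weakly_n_saturated {1..k} E0 n"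
  shows "n_saturated (HV k m) (H_edges k E0 m c) n"
  unfolding n_saturated_def
proof (intro allI impI)
  fix A f assume A: "A \<subseteq> HV k m \<and> finite A \<and> card A < n"
  have sym: "sym E0" using gr by (simp add: is_graph_def)
  define T where "T = {a\<in>A. f a}"
  have fT: "fst ` T \<subseteq> {1..k}" using A by (auto simp: T_def HV_def)
  have "card (fst ` T) < n"
    using A card_image_le[of T fst] card_mono[of A T] by (force simp: T_def)
  moreover have "finite (fst ` T)" using A by (simp add: T_def)
  ultimately have "\<exists>x\<in>{1..k}. \<forall>b\<in>fst ` T. (b, x) \<in> E0"
    using ws fT unfolding weakly_n_saturated_def by blast
  then obtain i where i: "i \<in> {1..k}" "\<forall>b\<in>fst ` T. (b, i) \<in> E0" by blast
  have "A \<subseteq> HV k m \<and> card A < n \<and> T \<subseteq> A" using A by (auto simp: T_def)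
  then obtain l where l: "l \<in> {1..m}" "(i, l) \<notin> A" "\<forall>a\<in>A. (fst a, i) \<in> E0 \<longrightarrow> c {a, (i, l)} = (a \<in> T)"
    using g i(1) unfolding good_def by blast
  show "\<exists>x\<in>HV k m - A. \<forall>a\<in>A. ((a, x) \<in> H_edges k E0 m c) = f a"
  proof (intro bexI[of _ "(i, l)"] ballI)
    fix a assume a: "a \<in> A"
    have ne: "a \<noteq> (i, l)" using a l by auto
    have aV: "a \<in> HV k m" using a A by auto
    have fa: "f a \<Longrightarrow> (fst a, i) \<in> E0"
    proof -
      assume "f a"
      then have "fst a \<in> fst ` T" using a by (auto simp: T_def)
      then show ?thesis using i(2) by blast
    qed
    have "((a, (i, l)) \<in> H_edges k E0 m c) = ((fst a, i) \<in> E0 \<and> c {a, (i, l)})"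
      using edge_iff[OF aV i(1) _ _ ne sym] l(1) by auto
    also have "\<dots> = f a"
      using l(3) a fa by (auto simp: T_def)
    finally show "((a, (i, l)) \<in> H_edges k E0 m c) = f a" .
  next
    show "(i, l) \<in> HV k m - A" using i l by (auto simp: HV_def)
  qed
qed

lemma good_X:
  assumes g: "good n k E0 m c" and gr: "is_graph {1..k} E0"
  shows "H_edges k E0 m c \<in> event_X n k E0 m"
  unfolding event_X_def
proof (intro CollectI allI impI)
  fix p ii i jj
  assume p: "p < n" and h: "i \<in> {1..k} \<and> (\<forall>q<p. ii q \<in> {1..k} \<and> (ii q, i) \<in> E0 \<and> jj q \<in> {0..m})"
  have sym: "sym E0" using gr by (simp add: is_graph_def)
  define A where "A = (\<lambda>q. (ii q, jj q)) ` {..<p}"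
  have AV: "A \<subseteq> HV k m" using h by (auto simp: A_def HV_def)
  have "card A < n" using p card_image_le[of "{..<p}" "\<lambda>q. (ii q, jj q)"] by (simp add: A_def)
  then obtain l where l: "l \<in> {1..m}" "(i, l) \<notin> A" "\<forall>a\<in>A. (fst a, i) \<in> E0 \<longrightarrow> c {a, (i, l)} = (a \<in> A)"
    using g h AV unfolding good_def by (meson order_refl)
  show "\<exists>l\<in>{0..m}. \<forall>q<p. ((ii q, jj q), i, l) \<in> H_edges k E0 m c"
  proof (intro bexI[of _ l] allI impI)
    fix q assume q: "q < p"
    have aA: "(ii q, jj q) \<in> A" using q by (simp add: A_def)
    have ne: "(ii q, jj q) \<noteq> (i, l)" using aA l by auto
    show "((ii q, jj q), i, l) \<in> H_edges k E0 m c"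
      using edge_iff[OF _ _ _ _ ne sym, of k m c] AV aA h q l by auto
  qed (use l in auto)
qed



lemma match_prob:
  fixes F :: "'a set set"
  assumes "finite F" "(\<lambda>a. {a, x}) ` A' \<subseteq> F" "x \<notin> A'" "x \<notin> T" "finite A'"
  shows "measure_pmf.prob (Pi_pmf F False (\<lambda>_. bernoulli_pmf (1/2))) {c. \<forall>a\<in>A'. c {a, x} = (a \<in> T)}
           \<ge> (1/2) ^ card A'"
proof -
  define S where "S = (\<lambda>a. {a, x}) ` A'"
  define B where "B = (\<lambda>y. if y \<in> S then {\<exists>a\<in>T. y = {a, x}} else UNIV)"
  have sub: "Pi F B \<subseteq> {c. \<forall>a\<in>A'. c {a, x} = (a \<in> T)}"
  proof (intro subsetI CollectI ballI)
    fix c a assume c: "c \<in> Pi F B" and a: "a \<in> A'"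
    have inS: "{a, x} \<in> S" using a by (simp add: S_def)
    then have "{a, x} \<in> F" using assms(2) S_def by auto
    then have "c {a, x} \<in> B {a, x}" using c by (simp add: Pi_iff)
    then have "c {a, x} = (\<exists>a'\<in>T. {a, x} = {a', x})" using inS by (simp add: B_def)
    also have "\<dots> = (a \<in> T)"
      using a assms(3,4) by (auto simp: doubleton_eq_iff)
    finally show "c {a, x} = (a \<in> T)" .
  qed
  have "measure_pmf.prob (Pi_pmf F False (\<lambda>_. bernoulli_pmf (1/2))) (Pi F B) =
        (\<Prod>y\<in>F. measure_pmf.prob (bernoulli_pmf (1/2)) (B y))"
    by (rule measure_Pi_pmf_Pi) (rule assms(1))
  also have "\<dots> = (\<Prod>y\<in>F. (if y \<in> S then 1/2 else 1))"
  proof (rule prod.cong[OF refl])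
    fix y show "measure_pmf.prob (bernoulli_pmf (1/2)) (B y) = (if y \<in> S then 1/2 else 1)"
      by (cases "\<exists>a\<in>T. y = {a, x}") (auto simp: B_def measure_pmf_single)
  qed
  also have "\<dots> = (1/2) ^ card S"
    using assms(1,2) by (simp add: prod.If_cases S_def Int_absorb1 Int_absorb2)
  also have "(1/2::real) ^ card S \<ge> (1/2) ^ card A'"
    unfolding S_def by (rule power_decreasing) (use card_image_le[OF assms(5)] in auto)
  finally have "(1/2) ^ card A' \<le> measure_pmf.prob (Pi_pmf F False (\<lambda>_. bernoulli_pmf (1/2))) (Pi F B)" .
  also have "\<dots> \<le> measure_pmf.prob (Pi_pmf F False (\<lambda>_. bernoulli_pmf (1/2))) {c. \<forall>a\<in>A'. c {a, x} = (a \<in> T)}"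
    by (rule measure_pmf.finite_measure_mono[OF sub]) simp
  finally show ?thesis .
qed



lemma card_small_subsets:
  assumes "finite V" "card V \<ge> 1"
  shows "card {A. A \<subseteq> V \<and> card A < n} \<le> n * card V ^ n"
proof -
  have eq: "{A. A \<subseteq> V \<and> card A < n} = (\<Union>j\<in>{..<n}. {A. A \<subseteq> V \<and> card A = j})" by auto
  have "card {A. A \<subseteq> V \<and> card A < n} \<le> (\<Sum>j\<in>{..<n}. card {A. A \<subseteq> V \<and> card A = j})"
    unfolding eq by (rule card_UN_le) simp
  also have "\<dots> \<le> (\<Sum>j\<in>{..<n}. card V ^ n)"
  proof (rule sum_mono)
    fix j assume j: "j \<in> {..<n}"
    have "card {A. A \<subseteq> V \<and> card A = j} = card V choose j" by (rule n_subsets[OF assms(1)])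
    also have "\<dots> \<le> card V ^ j"
      by (cases "j \<le> card V") (auto simp: binomial_le_pow binomial_eq_0)
    also have "\<dots> \<le> card V ^ n" using j assms(2) by (intro power_increasing) auto
    finally show "card {A. A \<subseteq> V \<and> card A = j} \<le> card V ^ n" .
  qed
  finally show ?thesis by simp
qed

lemma exists_good:
  assumes k: "k \<ge> 1" and sym: "sym E0"
  shows "\<exists>m c. c \<in> set_pmf (Pi_pmf (free_pairs k E0 m) False (\<lambda>_. bernoulli_pmf (1/2))) \<and> good n k E0 m c"
proof -
  define q :: real where "q = 1 - (1/2) ^ n"
  have q0: "0 \<le> q" and q1: "q < 1" by (auto simp: q_def power_le_one)
  define C :: real where "C = real k * real n * 2 ^ n * real k ^ n"
  have lim: "(\<lambda>M. C * ((real M + real (n + 1)) ^ n * q ^ M)) \<longlonglongrightarrow> C * 0"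
    by (intro tendsto_mult tendsto_const poly_geom_lim q0 q1) simp
  then have "\<forall>\<^sub>F M in sequentially. C * ((real M + real (n + 1)) ^ n * q ^ M) < 1"
    using order_tendstoD(2)[OF lim, of 1] by simp
  then obtain M where M: "C * ((real M + real (n + 1)) ^ n * q ^ M) < 1"
    by (auto simp: eventually_sequentially)
  define m where "m = M + n"
  define F where "F = free_pairs k E0 m"
  define P where "P = Pi_pmf F False (\<lambda>_. bernoulli_pmf (1/2))"
  define V where "V = HV k m"
  define AA where "AA = {A. A \<subseteq> V \<and> card A < n}"
  define I where "I = Sigma {1..k} (\<lambda>_. Sigma AA Pow)"
  define L where "L = (\<lambda>(i::nat) (A::(nat \<times> nat) set). {l\<in>{1..m}. (i, l) \<notin> A})"
  define match where "match = (\<lambda>i A T l (c :: (nat \<times> nat) set \<Rightarrow> bool).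
      \<forall>a\<in>A. (fst a, i) \<in> E0 \<longrightarrow> c {a, (i, l)} = (a \<in> T))"
  define Bad where "Bad = (\<lambda>j. {c. \<forall>l\<in>L (fst j) (fst (snd j)). \<not> match (fst j) (fst (snd j)) (snd (snd j)) l c})"
  have finV: "finite V" by (simp add: V_def HV_def)
  have cardV: "card V = k * (m + 1)" by (simp add: V_def HV_def card_cartesian_product)
  have finF: "finite F"
  proof -
    have "F \<subseteq> (\<lambda>(u, v). {u, v}) ` (V \<times> V)" unfolding F_def free_pairs_def V_def by auto
    then show ?thesis using finV finite_subset by blast
  qed
  have finAA: "finite AA" using finV by (simp add: AA_def)
  have finSig: "finite (Sigma AA Pow)" using finAA
    by (intro finite_SigmaI) (auto simp: AA_def intro: finite_subset[OF _ finV])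
  have finI: "finite I" unfolding I_def using finSig by (simp add: finite_cartesian_product)
  have cardAA: "card AA \<le> n * (k * (m + 1)) ^ n"
    using card_small_subsets[OF finV, of n] cardV k unfolding AA_def by simp
  have cardI: "card I \<le> k * (card AA * 2 ^ n)"
  proof -
    have "card I = (\<Sum>i\<in>{1..k}. card (Sigma AA Pow))"
      unfolding I_def by (rule card_SigmaI) (use finSig in auto)
    also have "card (Sigma AA Pow) = (\<Sum>A\<in>AA. card (Pow A))"
      by (rule card_SigmaI) (use finAA finV in \<open>auto simp: AA_def intro: finite_subset\<close>)
    also have "\<dots> \<le> (\<Sum>A\<in>AA. 2 ^ n)"
    proof (rule sum_mono)
      fix A assume "A \<in> AA"
      then have "finite A" "card A < n" using finV by (auto simp: AA_def intro: finite_subset)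
      then show "card (Pow A) \<le> 2 ^ n" by (simp add: card_Pow)
    qed
    finally show ?thesis by simp
  qed
  have cardI': "real (card I) \<le> C * (real M + real (n + 1)) ^ n"
  proof -
    have "card I \<le> k * (n * (k * (m + 1)) ^ n * 2 ^ n)"
      using cardI cardAA by (meson le_trans mult_le_mono2 mult_le_mono1)
    then have "real (card I) \<le> real (k * (n * (k * (m + 1)) ^ n * 2 ^ n))" by linarith
    also have "\<dots> = real k * (real n * (real (k * (m + 1))) ^ n * 2 ^ n)"
      by (simp only: of_nat_mult of_nat_power of_nat_numeral)
    also have "real (k * (m + 1)) = real k * (real M + real (n + 1))"
      by (simp add: m_def algebra_simps)
    also have "real k * (real n * (real k * (real M + real (n + 1))) ^ n * 2 ^ n) =
               C * (real M + real (n + 1)) ^ n"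
      unfolding C_def power_mult_distrib by (simp add: algebra_simps)
    finally show ?thesis .
  qed
  have badj: "measure_pmf.prob P (Bad j) \<le> q ^ M" if j: "j \<in> I" for j
  proof -
    obtain i A T where jj: "j = (i, A, T)" by (cases j) auto
    have i: "i \<in> {1..k}" and AV: "A \<subseteq> V" and cA: "card A < n" and TA: "T \<subseteq> A"
      using j by (auto simp: jj I_def AA_def)
    have finA: "finite A" using AV finV finite_subset by blast
    define S where "S = (\<lambda>l. (\<lambda>a. {a, (i, l)}) ` {a\<in>A. (fst a, i) \<in> E0})"
    have finL: "finite (L i A)" by (simp add: L_def)
    have SF: "S l \<subseteq> F" if "l \<in> L i A" for l
    proof
      fix y assume "y \<in> S l"
      then obtain a where a: "a \<in> A" "(fst a, i) \<in> E0" "y = {a, (i, l)}" by (auto simp: S_def)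
      have "a \<noteq> (i, l)" using a that by (auto simp: L_def)
      then show "y \<in> F"
        using free_pair_iff[of a k m i l E0] a that AV i sym by (auto simp: F_def V_def L_def)
    qed
    have disj: "disjoint_family_on S (L i A)"
      unfolding disjoint_family_on_def
    proof (intro ballI impI)
      fix l l' assume l: "l \<in> L i A" "l' \<in> L i A" "l \<noteq> l'"
      show "S l \<inter> S l' = {}"
      proof (rule ccontr)
        assume "S l \<inter> S l' \<noteq> {}"
        then obtain a a' where aa: "a \<in> A" "a' \<in> A" "{a, (i, l)} = {a', (i, l')}"
          by (auto simp: S_def)
        then have "(i, l) = a'" using l by (auto simp: doubleton_eq_iff)
        then show False using aa l by (auto simp: L_def)
      qed
    qed
    have dep: "(\<not> match i A T l c) = (\<not> match i A T l c')"
      if "l \<in> L i A" "\<And>x. x \<in> S l \<Longrightarrow> c x = c' x" for l c c'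
    proof -
      have "c {a, (i, l)} = c' {a, (i, l)}" if "a \<in> A" "(fst a, i) \<in> E0" for a
        using that \<open>\<And>x. x \<in> S l \<Longrightarrow> c x = c' x\<close> by (auto simp: S_def)
      then show ?thesis by (auto simp: match_def)
    qed
    have "measure_pmf.prob P (Bad j) = measure_pmf.prob P {c. \<forall>l\<in>L i A. \<not> match i A T l c}"
      by (simp add: Bad_def jj)
    also have "\<dots> = (\<Prod>l\<in>L i A. measure_pmf.prob P {c. \<not> match i A T l c})"
      unfolding P_def by (rule indep_blocks[OF finL finF SF disj dep])
    also have "\<dots> \<le> (\<Prod>l\<in>L i A. q)"
    proof (rule prod_mono, rule conjI)
      fix l assume l: "l \<in> L i A"
      show "0 \<le> measure_pmf.prob P {c. \<not> match i A T l c}" by simp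
      have ex: "(\<lambda>a. {a, (i, l)}) ` {a\<in>A. (fst a, i) \<in> E0} \<subseteq> F" using SF[OF l] by (simp add: S_def)
      have "(1/2) ^ n \<le> (1/2::real) ^ card {a\<in>A. (fst a, i) \<in> E0}"
        by (rule power_decreasing) (use cA card_mono[OF finA, of "{a\<in>A. (fst a, i) \<in> E0}"] in auto)
      also have "\<dots> \<le> measure_pmf.prob P {c. \<forall>a\<in>{a\<in>A. (fst a, i) \<in> E0}. c {a, (i, l)} = (a \<in> T)}"
        unfolding P_def by (rule match_prob[OF finF ex]) (use l TA finA in \<open>auto simp: L_def\<close>)
      also have "{c. \<forall>a\<in>{a\<in>A. (fst a, i) \<in> E0}. c {a, (i, l)} = (a \<in> T)} = {c. match i A T l c}"
        by (auto simp: match_def)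
      finally have ge: "(1/2) ^ n \<le> measure_pmf.prob P {c. match i A T l c}" .
      have "{c. \<not> match i A T l c} = space (measure_pmf P) - {c. match i A T l c}" by auto
      then have "measure_pmf.prob P {c. \<not> match i A T l c} = 1 - measure_pmf.prob P {c. match i A T l c}"
        using measure_pmf.prob_compl[of "{c. match i A T l c}" P] by simp
      then show "measure_pmf.prob P {c. \<not> match i A T l c} \<le> q" using ge by (simp add: q_def)
    qed
    also have "\<dots> = q ^ card (L i A)" by simp
    also have "\<dots> \<le> q ^ M"
    proof (rule power_decreasing[OF _ q0 less_imp_le[OF q1]])
      have "{1..m} - snd ` A \<subseteq> L i A" by (force simp: L_def image_iff)
      then have "card ({1..m} - snd ` A) \<le> card (L i A)" by (rule card_mono[OF finL])
      moreover have "card {1..m} - card (snd ` A) \<le> card ({1..m} - snd ` A)"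
        by (rule diff_card_le_card_Diff) (use finA in simp)
      moreover have "card (snd ` A) \<le> card A" by (rule card_image_le[OF finA])
      ultimately show "M \<le> card (L i A)" using cA by (simp add: m_def)
    qed
    finally show ?thesis .
  qed
  have "measure_pmf.prob P (\<Union>j\<in>I. Bad j) \<le> (\<Sum>j\<in>I. measure_pmf.prob P (Bad j))"
    by (rule measure_pmf.finite_measure_subadditive_finite[OF finI]) simp
  also have "\<dots> \<le> (\<Sum>j\<in>I. q ^ M)" by (rule sum_mono) (rule badj)
  also have "\<dots> = real (card I) * q ^ M" by simp
  also have "\<dots> \<le> C * (real M + real (n + 1)) ^ n * q ^ M"
    by (rule mult_right_mono[OF cardI']) (use q0 in simp)
  also have "\<dots> < 1" using M by (simp add: mult.assoc)
  finally have small: "measure_pmf.prob P (\<Union>j\<in>I. Bad j) < 1" .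
  have "\<exists>c\<in>set_pmf P. c \<notin> (\<Union>j\<in>I. Bad j)"
  proof (rule ccontr)
    assume "\<not> ?thesis"
    then have "set_pmf P \<subseteq> (\<Union>j\<in>I. Bad j)" by blast
    then have "measure_pmf.prob P (\<Union>j\<in>I. Bad j) = 1"
      by (simp add: measure_pmf.prob_eq_1 AE_measure_pmf_iff subset_eq)
    then show False using small by simp
  qed
  then obtain c where c: "c \<in> set_pmf P" "c \<notin> (\<Union>j\<in>I. Bad j)" by blast
  have "good n k E0 m c"
    unfolding good_def
  proof (intro ballI allI impI)
    fix i A T assume i: "i \<in> {1..k}" and A: "A \<subseteq> HV k m \<and> card A < n \<and> T \<subseteq> A"
    then have "(i, A, T) \<in> I" by (auto simp: I_def AA_def V_def)
    then have "c \<notin> Bad (i, A, T)" using c(2) by blast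
    then obtain l where "l \<in> L i A" "match i A T l c" by (auto simp: Bad_def)
    then show "\<exists>l\<in>{1..m}. (i, l) \<notin> A \<and> (\<forall>a\<in>A. (fst a, i) \<in> E0 \<longrightarrow> c {a, (i, l)} = (a \<in> T))"
      by (auto simp: L_def match_def)
  qed
  then show ?thesis using c(1) unfolding P_def F_def by blast
qed


theorem lemma1:
  fixes n k :: nat and E0 :: "(nat \<times> nat) set"
  assumes "is_graph {1..k} E0"
    and "weakly_n_saturated {1..k} E0 n"
    and "n \<le> k"
  shows "\<exists>m::nat.
           measure_pmf.prob (H_random k E0 m) {E. n_saturated (HV k m) E n} > 0 \<and>
           measure_pmf.prob (H_random k E0 m) (event_X n k E0 m) > 0"
proof -
  have k: "k \<ge> 1" using assms(1) by (auto simp: is_graph_def)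
  have sym: "sym E0" using assms(1) by (simp add: is_graph_def)
  obtain m c where c: "c \<in> set_pmf (Pi_pmf (free_pairs k E0 m) False (\<lambda>_. bernoulli_pmf (1/2)))"
      "good n k E0 m c"
    using exists_good[OF k sym, of n] by blast
  have mem: "H_edges k E0 m c \<in> set_pmf (H_random k E0 m)"
    unfolding H_random_def using c(1) by simp
  have "measure_pmf.prob (H_random k E0 m) {E. n_saturated (HV k m) E n} > 0"
    by (rule measure_pmf_posI[OF mem]) (use good_sat[OF c(2) assms(1,2)] in simp)
  moreover have "measure_pmf.prob (H_random k E0 m) (event_X n k E0 m) > 0"
    by (rule measure_pmf_posI[OF mem]) (rule good_X[OF c(2) assms(1)])
  ultimately show ?thesis by blast
qed

end
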